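(* Let $\mathbb{K}=(G,M,I)$ be a formal context and let $\operatorname{Ext}(\mathbb{K})$ be its set of extents. Consider the lattice ${\downarrow}\operatorname{Ext}(\mathbb{K})$ of all closure systems $\mathcal{R}$ on $G$ with $\mathcal{R}\subseteq \operatorname{Ext}(\mathbb{K})$, ordered by set inclusion. For $\mathcal{R}\in{\downarrow}\operatorname{Ext}(\mathbb{K})$ the following are equivalent: (1) $\mathcal{R}$ is join-irreducible in ${\downarrow}\operatorname{Ext}(\mathbb{K})$; (2) there exists $A\in\operatorname{Ext}(\mathbb{K})\setminus\{G\}$ with $\mathcal{R}=\{G,A\}$.
   Context: A formal context is a triple $(G,M,I)$ with finite nonempty sets $G$ (objects), $M$ (attributes) and $I\subseteq G\times M$. Derivations: for $A\subseteq G$, $A'=\{m\in M\mid \forall a\in A:(a,m)\in I\}$; for $B\subseteq M$, $B'=\{g\in G\mid \forall b\in B:(g,b)\in I\}$. An extent is a set $A\subseteq G$ with $A''=A$; $\operatorname{Ext}(\mathbb{K})$ is the set of all extents (it contains $G$ and is closed under intersections). A closure system on $G$ is a family of subsets of $G$ containing $G$ and closed under arbitrary intersections. In ${\downarrow}\operatorname{Ext}(\mathbb{K})$ the meet is intersection and the join of a family is the smallest closure system on $G$ containing its union; the least element is $\{G\}$. An element $x$ of a lattice is join-irreducible if $x\neq\bot$ and $x=\bigvee Y$ implies $x\in Y$. *)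

theory Defs
  imports Main
begin

definition formal_context :: "'g set \<Rightarrow> 'm set \<Rightarrow> ('g \<times> 'm) set \<Rightarrow> bool" where
  "formal_context G M I \<longleftrightarrow> finite G \<and> G \<noteq> {} \<and> finite M \<and> M \<noteq> {} \<and> I \<subseteq> G \<times> M"

definition obj_deriv :: "'g set \<Rightarrow> 'm set \<Rightarrow> ('g \<times> 'm) set \<Rightarrow> 'g set \<Rightarrow> 'm set" where
  "obj_deriv G M I A = {m \<in> M. \<forall>a\<in>A. (a, m) \<in> I}"

definition attr_deriv :: "'g set \<Rightarrow> 'm set \<Rightarrow> ('g \<times> 'm) set \<Rightarrow> 'm set \<Rightarrow> 'g set" where
  "attr_deriv G M I B = {g \<in> G. \<forall>b\<in>B. (g, b) \<in> I}"

definition extents :: "'g set \<Rightarrow> 'm set \<Rightarrow> ('g \<times> 'm) set \<Rightarrow> 'g set set" where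
  "extents G M I = {A. A \<subseteq> G \<and> attr_deriv G M I (obj_deriv G M I A) = A}"

text \<open>A closure system on G: a family of subsets of G containing G and closed under
  arbitrary intersections (of nonempty subfamilies; the empty intersection is G).\<close>
definition closure_system :: "'g set \<Rightarrow> 'g set set \<Rightarrow> bool" where
  "closure_system G R \<longleftrightarrow> R \<subseteq> Pow G \<and> G \<in> R \<and> (\<forall>S\<subseteq>R. S \<noteq> {} \<longrightarrow> \<Inter>S \<in> R)"

definition down_ext :: "'g set \<Rightarrow> 'm set \<Rightarrow> ('g \<times> 'm) set \<Rightarrow> 'g set set set" where
  "down_ext G M I = {R. closure_system G R \<and> R \<subseteq> extents G M I}"

definition cs_join :: "'g set \<Rightarrow> 'g set set set \<Rightarrow> 'g set set" where
  "cs_join G Y = \<Inter>{R. closure_system G R \<and> \<Union>Y \<subseteq> R}"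

definition join_irreducible_down_ext :: "'g set \<Rightarrow> 'm set \<Rightarrow> ('g \<times> 'm) set \<Rightarrow> 'g set set \<Rightarrow> bool" where
  "join_irreducible_down_ext G M I R \<longleftrightarrow>
     R \<noteq> {G} \<and> (\<forall>Y\<subseteq>down_ext G M I. R = cs_join G Y \<longrightarrow> R \<in> Y)"

end

theory Submission
  imports Defs
begin

lemma cs_join_upper: "\<Union>Y \<subseteq> cs_join G Y"
  unfolding cs_join_def by blast

lemma cs_join_least: "closure_system G C \<Longrightarrow> \<Union>Y \<subseteq> C \<Longrightarrow> cs_join G Y \<subseteq> C"
  unfolding cs_join_def by blast

lemma cs_pair: assumes "A \<subseteq> G" shows "closure_system G {G, A}"
  unfolding closure_system_def
proof (intro conjI allI impI)
  show "{G, A} \<subseteq> Pow G" using assms by auto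
  show "G \<in> {G, A}" by simp
  fix S assume "S \<subseteq> {G, A}" "S \<noteq> {}"
  then have "S = {G} \<or> S = {A} \<or> S = {G, A}" by blast
  then show "\<Inter>S \<in> {G, A}" using assms by auto
qed

lemma cs_single: "closure_system G {G}"
  unfolding closure_system_def by auto

theorem proposition3:
  fixes G :: "'g set" and M :: "'m set" and I :: "('g \<times> 'm) set" and R :: "'g set set"
  assumes "formal_context G M I"
    and "R \<in> down_ext G M I"
  shows "join_irreducible_down_ext G M I R \<longleftrightarrow>
           (\<exists>A \<in> extents G M I - {G}. R = {G, A})"
proof
  have csR: "closure_system G R" and RE: "R \<subseteq> extents G M I"
    using assms(2) unfolding down_ext_def by auto
  have GR: "G \<in> R" using csR unfolding closure_system_def by auto
  assume ji: "join_irreducible_down_ext G M I R"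
  then have RG: "R \<noteq> {G}" unfolding join_irreducible_down_ext_def by auto
  define Y where "Y = (\<lambda>A. {G, A}) ` (R - {G})"
  have "Y \<subseteq> down_ext G M I"
  proof
    fix Z assume "Z \<in> Y"
    then obtain A where A: "A \<in> R" "Z = {G, A}" unfolding Y_def by auto
    have "A \<subseteq> G" using A csR unfolding closure_system_def by auto
    moreover have "G \<in> extents G M I" "A \<in> extents G M I" using GR A RE by auto
    ultimately show "Z \<in> down_ext G M I" using A cs_pair unfolding down_ext_def by auto
  qed
  moreover have U: "\<Union>Y = R" using GR RG unfolding Y_def by auto
  have "R = cs_join G Y"
    using cs_join_upper[of Y G] cs_join_least[OF csR, of Y] U by auto
  ultimately have "R \<in> Y" using ji unfolding join_irreducible_down_ext_def by auto
  then show "\<exists>A \<in> extents G M I - {G}. R = {G, A}" using RE unfolding Y_def by auto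
next
  assume "\<exists>A \<in> extents G M I - {G}. R = {G, A}"
  then obtain A where A: "A \<in> extents G M I" "A \<noteq> G" and R: "R = {G, A}" by auto
  have "\<forall>Y\<subseteq>down_ext G M I. R = cs_join G Y \<longrightarrow> R \<in> Y"
  proof (intro allI impI)
    fix Y assume Y: "Y \<subseteq> down_ext G M I" and RY: "R = cs_join G Y"
    have sub: "\<Union>Y \<subseteq> R" using RY cs_join_upper by metis
    have "A \<in> \<Union>Y"
    proof (rule ccontr)
      assume "A \<notin> \<Union>Y"
      then have "\<Union>Y \<subseteq> {G}" using sub R by auto
      then have "cs_join G Y \<subseteq> {G}" using cs_join_least[OF cs_single] by blast
      then show False using RY R A by auto
    qed
    then obtain Z where Z: "Z \<in> Y" "A \<in> Z" by auto
    have "G \<in> Z" using Z Y unfolding down_ext_def closure_system_def by auto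
    moreover have "Z \<subseteq> R" using Z sub by auto
    ultimately have "Z = R" using Z R by auto
    then show "R \<in> Y" using Z by simp
  qed
  then show "join_irreducible_down_ext G M I R"
    unfolding join_irreducible_down_ext_def using A R by auto
qed

end
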